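(* Let $G$ be a graph with no induced $P_7$, $C_4$ or $C_6$, and let $(B_1,\dots,B_5)$ be a nice blowup of $C_5$ in $G$. Then: (1) for each $i$, the vertices of $B_i$ can be ordered $b_i^1,\dots,b_i^{|B_i|}$ so that $N_{B_{i-1}\cup B_{i+1}}(b_i^1)\subseteq N_{B_{i-1}\cup B_{i+1}}(b_i^2)\subseteq\cdots\subseteq N_{B_{i-1}\cup B_{i+1}}(b_i^{|B_i|})$; (2) for each $i$, there is a vertex in $B_i$ complete to $B_{i-1}\cup B_{i+1}$; in particular, each vertex of $B_{i-1}$ and each vertex of $B_{i+1}$ have a common neighbor in $B_i$.
   Context: Indices modulo $5$. A tuple $(B_1,\dots,B_5)$ of subsets of $V(G)$ is a nice blowup of $C_5$ if: each $B_i$ is a clique and the $B_i$ are pairwise disjoint; every vertex of $B_i$ has a neighbor in $B_{i-1}$ and in $B_{i+1}$; $B_i$ is anticomplete to $B_{i+2}$; and there are no $a\in B_i$, distinct $b,c\in B_{i+1}$, $d\in B_{i+2}$ with $G[\{a,b,c,d\}]\cong P_4$. For $S\subseteq V(G)$ and a vertex $v$, $N_S(v)$ is the set of neighbors of $v$ in $S$. A vertex is complete to a set if it is adjacent to all its vertices. *)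

theory Defs
  imports Main
begin

definition graph :: "'a set \<Rightarrow> ('a \<Rightarrow> 'a \<Rightarrow> bool) \<Rightarrow> bool" where
  "graph V E \<longleftrightarrow> finite V \<and> (\<forall>u v. E u v \<longrightarrow> u \<in> V \<and> v \<in> V)
     \<and> (\<forall>u v. E u v \<longrightarrow> E v u) \<and> (\<forall>v. \<not> E v v)"

definition induced_path :: "'a set \<Rightarrow> ('a \<Rightarrow> 'a \<Rightarrow> bool) \<Rightarrow> 'a list \<Rightarrow> bool" where
  "induced_path V E vs \<longleftrightarrow> distinct vs \<and> set vs \<subseteq> V \<and>
     (\<forall>i<length vs. \<forall>j<length vs. E (vs ! i) (vs ! j) \<longleftrightarrow> (i = j + 1 \<or> j = i + 1))"

definition induced_cycle :: "'a set \<Rightarrow> ('a \<Rightarrow> 'a \<Rightarrow> bool) \<Rightarrow> 'a list \<Rightarrow> bool" where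
  "induced_cycle V E vs \<longleftrightarrow> distinct vs \<and> set vs \<subseteq> V \<and> length vs \<ge> 3 \<and>
     (\<forall>i<length vs. \<forall>j<length vs.
        E (vs ! i) (vs ! j) \<longleftrightarrow> (i = (j + 1) mod length vs \<or> j = (i + 1) mod length vs))"

definition has_induced_P :: "'a set \<Rightarrow> ('a \<Rightarrow> 'a \<Rightarrow> bool) \<Rightarrow> nat \<Rightarrow> bool" where
  "has_induced_P V E k \<longleftrightarrow> (\<exists>vs. length vs = k \<and> induced_path V E vs)"

definition has_induced_C :: "'a set \<Rightarrow> ('a \<Rightarrow> 'a \<Rightarrow> bool) \<Rightarrow> nat \<Rightarrow> bool" where
  "has_induced_C V E k \<longleftrightarrow> (\<exists>vs. length vs = k \<and> induced_cycle V E vs)"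

definition induces_P4 :: "'a set \<Rightarrow> ('a \<Rightarrow> 'a \<Rightarrow> bool) \<Rightarrow> 'a set \<Rightarrow> bool" where
  "induces_P4 V E S \<longleftrightarrow> (\<exists>vs. length vs = 4 \<and> set vs = S \<and> induced_path V E vs)"

definition clique :: "('a \<Rightarrow> 'a \<Rightarrow> bool) \<Rightarrow> 'a set \<Rightarrow> bool" where
  "clique E X \<longleftrightarrow> (\<forall>u\<in>X. \<forall>v\<in>X. u \<noteq> v \<longrightarrow> E u v)"

definition anticomplete :: "('a \<Rightarrow> 'a \<Rightarrow> bool) \<Rightarrow> 'a set \<Rightarrow> 'a set \<Rightarrow> bool" where
  "anticomplete E X Y \<longleftrightarrow> (\<forall>u\<in>X. \<forall>v\<in>Y. \<not> E u v)"

definition complete_to :: "('a \<Rightarrow> 'a \<Rightarrow> bool) \<Rightarrow> 'a \<Rightarrow> 'a set \<Rightarrow> bool" where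
  "complete_to E v X \<longleftrightarrow> (\<forall>u\<in>X. E v u)"

definition nbhd_in :: "('a \<Rightarrow> 'a \<Rightarrow> bool) \<Rightarrow> 'a set \<Rightarrow> 'a \<Rightarrow> 'a set" where
  "nbhd_in E S v = {u\<in>S. E v u}"

text \<open>Nice blowup of C_5; the parts are B 0, ..., B 4, indices taken modulo 5
  ((i+1) mod 5 is i+1, (i+4) mod 5 is i-1). Parts are nonempty (blowup of C_5).\<close>
definition nice_blowup_C5 :: "'a set \<Rightarrow> ('a \<Rightarrow> 'a \<Rightarrow> bool) \<Rightarrow> (nat \<Rightarrow> 'a set) \<Rightarrow> bool" where
  "nice_blowup_C5 V E B \<longleftrightarrow>
    (\<forall>i<5. B i \<subseteq> V \<and> B i \<noteq> {} \<and> clique E (B i)) \<and>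
    (\<forall>i<5. \<forall>j<5. i \<noteq> j \<longrightarrow> B i \<inter> B j = {}) \<and>
    (\<forall>i<5. \<forall>v\<in>B i. (\<exists>u\<in>B ((i + 4) mod 5). E v u) \<and> (\<exists>u\<in>B ((i + 1) mod 5). E v u)) \<and>
    (\<forall>i<5. anticomplete E (B i) (B ((i + 2) mod 5))) \<and>
    (\<forall>i<5. \<not> (\<exists>a b c d. a \<in> B i \<and> b \<in> B ((i + 1) mod 5) \<and> c \<in> B ((i + 1) mod 5) \<and> b \<noteq> c
               \<and> d \<in> B ((i + 2) mod 5) \<and> induces_P4 V E {a, b, c, d}))"

end

theory Submission
  imports Defs
begin

lemma all4: "(\<forall>i<(4::nat). P i) = (P 0 \<and> P 1 \<and> P 2 \<and> P 3)"
proof -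
  have "{..<(4::nat)} = {0,1,2,3}" by auto
  then show ?thesis by (metis (no_types, lifting) insert_iff lessThan_iff empty_iff)
qed

lemma P4I:
  assumes g: "graph V E" and d: "distinct [a,b,c,d]" and V: "a\<in>V" "b\<in>V" "c\<in>V" "d\<in>V"
    and e: "E a b" "E b c" "E c d" and n: "\<not> E a c" "\<not> E b d" "\<not> E a d"
  shows "induced_path V E [a,b,c,d]"
proof -
  from g have sym: "\<And>u v. E u v \<Longrightarrow> E v u" and irr: "\<And>v. \<not> E v v"
    unfolding graph_def by blast+
  have "\<forall>i<4. \<forall>j<4. E ([a,b,c,d] ! i) ([a,b,c,d] ! j) \<longleftrightarrow> (i = j + 1 \<or> j = i + 1)"
    using e n sym irr by (simp add: all4) blast
  then show ?thesis using d V unfolding induced_path_def by auto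
qed

lemma C4I:
  assumes g: "graph V E" and d: "distinct [a,b,c,d]" and V: "a\<in>V" "b\<in>V" "c\<in>V" "d\<in>V"
    and e: "E a b" "E b c" "E c d" "E d a" and n: "\<not> E a c" "\<not> E b d"
  shows "induced_cycle V E [a,b,c,d]"
proof -
  from g have sym: "\<And>u v. E u v \<Longrightarrow> E v u" and irr: "\<And>v. \<not> E v v"
    unfolding graph_def by blast+
  have "\<forall>i<4. \<forall>j<4. E ([a,b,c,d] ! i) ([a,b,c,d] ! j) \<longleftrightarrow>
          (i = (j + 1) mod 4 \<or> j = (i + 1) mod 4)"
    using e n sym irr by (simp add: all4) blast
  then show ?thesis using d V unfolding induced_cycle_def by auto
qed

lemma chain_sort:
  assumes "finite S" and ch: "\<forall>x\<in>S. \<forall>y\<in>S. f x \<subseteq> f y \<or> f y \<subseteq> f x"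
    and fin: "\<forall>x\<in>S. finite (f x)"
  shows "\<exists>bs. distinct bs \<and> set bs = S \<and> (\<forall>j. Suc j < length bs \<longrightarrow> f (bs!j) \<subseteq> f (bs ! Suc j))"
proof -
  obtain xs where xs: "set xs = S" "distinct xs" using finite_distinct_list[OF assms(1)] by blast
  define bs where "bs = sort_key (\<lambda>x. card (f x)) xs"
  have s: "sorted (map (\<lambda>x. card (f x)) bs)" unfolding bs_def by (rule sorted_sort_key)
  have sb: "set bs = S" "distinct bs" unfolding bs_def using xs by auto
  have "\<forall>j. Suc j < length bs \<longrightarrow> f (bs!j) \<subseteq> f (bs ! Suc j)"
  proof (intro allI impI)
    fix j assume j: "Suc j < length bs"
    have c: "card (f (bs!j)) \<le> card (f (bs ! Suc j))"
    proof -
      have "map (\<lambda>x. card (f x)) bs ! j \<le> map (\<lambda>x. card (f x)) bs ! Suc j"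
        using s j unfolding sorted_iff_nth_mono by simp
      then show ?thesis using j by simp
    qed
    have m: "bs!j \<in> S" "bs ! Suc j \<in> S" using j sb by (auto intro: nth_mem)
    show "f (bs!j) \<subseteq> f (bs ! Suc j)"
    proof (cases "f (bs!j) \<subseteq> f (bs ! Suc j)")
      case False
      then have "f (bs ! Suc j) \<subseteq> f (bs!j)" using ch m by blast
      then have "f (bs ! Suc j) = f (bs!j)" using card_seteq fin m c by metis
      then show ?thesis by simp
    qed simp
  qed
  then show ?thesis using sb by blast
qed

lemma chain_max:
  assumes "finite S" "S \<noteq> {}" and ch: "\<forall>x\<in>S. \<forall>y\<in>S. f x \<subseteq> f y \<or> f y \<subseteq> f x"
    and fin: "\<forall>x\<in>S. finite (f x)"
  shows "\<exists>v\<in>S. \<forall>u\<in>S. f u \<subseteq> f v"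
proof -
  have fi: "finite ((\<lambda>x. card (f x)) ` S)" using assms(1) by simp
  have "Max ((\<lambda>x. card (f x)) ` S) \<in> (\<lambda>x. card (f x)) ` S" using fi assms(2) by simp
  then obtain v where v: "v \<in> S" "card (f v) = Max ((\<lambda>x. card (f x)) ` S)" by auto
  have "\<forall>u\<in>S. f u \<subseteq> f v"
  proof
    fix u assume u: "u \<in> S"
    have c: "card (f u) \<le> card (f v)" using v u fi by simp
    show "f u \<subseteq> f v"
    proof (cases "f u \<subseteq> f v")
      case False
      then have "f v \<subseteq> f u" using ch u v by blast
      then have "f v = f u" using card_seteq fin u c by metis
      then show ?thesis by simp
    qed simp
  qed
  then show ?thesis using v by blast
qed

lemma chain_core:
  assumes g: "graph V E" and c4: "\<not> has_induced_C V E 4"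
    and sub: "P \<subseteq> V" "Q \<subseteq> V" "R \<subseteq> V"
    and cl: "clique E P" "clique E Q" "clique E R" and ac: "anticomplete E P R"
    and dj: "P \<inter> Q = {}" "Q \<inter> R = {}" "P \<inter> R = {}"
    and np4: "\<forall>a b c d. a\<in>P \<longrightarrow> b\<in>Q \<longrightarrow> c\<in>Q \<longrightarrow> b\<noteq>c \<longrightarrow> d\<in>R \<longrightarrow> \<not> induces_P4 V E {a,b,c,d}"
    and bc: "b \<in> Q" "c \<in> Q"
  shows "nbhd_in E (P\<union>R) b \<subseteq> nbhd_in E (P\<union>R) c \<or> nbhd_in E (P\<union>R) c \<subseteq> nbhd_in E (P\<union>R) b"
proof (rule ccontr)
  assume "\<not> ?thesis"
  then obtain x y where x: "x \<in> P\<union>R" "E b x" "\<not> E c x" and y: "y \<in> P\<union>R" "E c y" "\<not> E b y"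
    unfolding nbhd_in_def by auto
  from g have sym: "\<And>u v. E u v \<Longrightarrow> E v u" and irr: "\<And>v. \<not> E v v"
    unfolding graph_def by blast+
  have bnc: "b \<noteq> c" using x by auto
  have xy: "x \<noteq> y" using x y by auto
  have Ebc: "E b c" using cl bc bnc unfolding clique_def by auto
  have V: "x \<in> V" "y \<in> V" "b \<in> V" "c \<in> V" using x y bc sub by auto
  consider "x\<in>P" "y\<in>P" | "x\<in>R" "y\<in>R" | "x\<in>P" "y\<in>R" | "x\<in>R" "y\<in>P" using x y by blast
  then show False
  proof cases
    case 1
    have "E x y" using cl 1 xy unfolding clique_def by auto
    have dd: "distinct [b,x,y,c]" using 1 bc dj bnc xy by auto
    have "induced_cycle V E [b,x,y,c]"
      by (rule C4I[OF g dd V(3) V(1) V(2) V(4) x(2) \<open>E x y\<close> y(2)[THEN sym] Ebc[THEN sym] y(3)]) (use x(3) sym in blast)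
    moreover have "length [b,x,y,c] = 4" by simp
    ultimately show False using c4 unfolding has_induced_C_def by blast
  next
    case 2
    have "E x y" using cl 2 xy unfolding clique_def by auto
    have dd: "distinct [b,x,y,c]" using 2 bc dj bnc xy by auto
    have "induced_cycle V E [b,x,y,c]"
      by (rule C4I[OF g dd V(3) V(1) V(2) V(4) x(2) \<open>E x y\<close> y(2)[THEN sym] Ebc[THEN sym] y(3)]) (use x(3) sym in blast)
    moreover have "length [b,x,y,c] = 4" by simp
    ultimately show False using c4 unfolding has_induced_C_def by blast
  next
    case 3
    have "\<not> E x y" using ac 3 unfolding anticomplete_def by auto
    have dd: "distinct [x,b,c,y]" using 3 bc dj bnc xy by auto
    have "induced_path V E [x,b,c,y]"
      by (rule P4I[OF g dd V(1) V(3) V(4) V(2) x(2)[THEN sym] Ebc y(2)]) (use x(3) y(3) \<open>\<not> E x y\<close> sym in blast)+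
    then have "induces_P4 V E {x,b,c,y}" unfolding induces_P4_def
      by (intro exI[of _ "[x,b,c,y]"]) auto
    then show False using np4 3 bc bnc by blast
  next
    case 4
    have "\<not> E y x" using ac 4 unfolding anticomplete_def by auto
    have dd: "distinct [y,c,b,x]" using 4 bc dj bnc xy by auto
    have "induced_path V E [y,c,b,x]"
      by (rule P4I[OF g dd V(2) V(4) V(3) V(1) y(2)[THEN sym] Ebc[THEN sym] x(2)]) (use x(3) y(3) \<open>\<not> E y x\<close> sym in blast)+
    then have "induces_P4 V E {y,c,b,x}" unfolding induces_P4_def
      by (intro exI[of _ "[y,c,b,x]"]) auto
    then show False using np4 4 bc bnc by blast
  qed
qed

theorem lemma4p1:
  fixes V :: "'a set" and E :: "'a \<Rightarrow> 'a \<Rightarrow> bool" and B :: "nat \<Rightarrow> 'a set"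
  assumes "graph V E"
    and "\<not> has_induced_P V E 7" and "\<not> has_induced_C V E 4" and "\<not> has_induced_C V E 6"
    and "nice_blowup_C5 V E B"
  shows "(\<forall>i<5. \<exists>bs. distinct bs \<and> set bs = B i \<and>
           (\<forall>j. Suc j < length bs \<longrightarrow>
              nbhd_in E (B ((i + 4) mod 5) \<union> B ((i + 1) mod 5)) (bs ! j)
              \<subseteq> nbhd_in E (B ((i + 4) mod 5) \<union> B ((i + 1) mod 5)) (bs ! Suc j))) \<and>
         (\<forall>i<5. (\<exists>v\<in>B i. complete_to E v (B ((i + 4) mod 5) \<union> B ((i + 1) mod 5))) \<and>
           (\<forall>x\<in>B ((i + 4) mod 5). \<forall>y\<in>B ((i + 1) mod 5). \<exists>z\<in>B i. E x z \<and> E y z))"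
proof -
  have g: "graph V E" by fact
  from g have sym: "\<And>u v. E u v \<Longrightarrow> E v u" and finV: "finite V"
    unfolding graph_def by blast+
  note nb = assms(5)[unfolded nice_blowup_C5_def]
  have key: "\<And>i. i < 5 \<Longrightarrow> finite (B i) \<and> B i \<noteq> {} \<and>
     (\<forall>x\<in>B i. \<forall>y\<in>B i. nbhd_in E (B ((i + 4) mod 5) \<union> B ((i + 1) mod 5)) x \<subseteq> nbhd_in E (B ((i + 4) mod 5) \<union> B ((i + 1) mod 5)) y
        \<or> nbhd_in E (B ((i + 4) mod 5) \<union> B ((i + 1) mod 5)) y \<subseteq> nbhd_in E (B ((i + 4) mod 5) \<union> B ((i + 1) mod 5)) x) \<and>
     (\<forall>x\<in>B i. finite (nbhd_in E (B ((i + 4) mod 5) \<union> B ((i + 1) mod 5)) x)) \<and>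
     (\<forall>u\<in>B ((i + 4) mod 5) \<union> B ((i + 1) mod 5). \<exists>w\<in>B i. E u w)"
  proof -
    fix i :: nat assume i: "i < 5"
    define p where "p = (i + 4) mod 5"
    define r where "r = (i + 1) mod 5"
    have ar: "p < 5" "r < 5" "(p + 1) mod 5 = i" "(p + 2) mod 5 = r" "(r + 4) mod 5 = i"
      "p \<noteq> i" "i \<noteq> r" "p \<noteq> r"
      using i unfolding p_def r_def by presburger+
    have sub: "B p \<subseteq> V" "B i \<subseteq> V" "B r \<subseteq> V" and ne: "B i \<noteq> {}"
      and cl: "clique E (B p)" "clique E (B i)" "clique E (B r)"
      using nb ar i by blast+
    have ac: "anticomplete E (B p) (B r)" using nb ar by metis
    have dj: "B p \<inter> B i = {}" "B i \<inter> B r = {}" "B p \<inter> B r = {}" using nb ar i by blast+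
    have np4: "\<forall>a b c d. a\<in>B p \<longrightarrow> b\<in>B i \<longrightarrow> c\<in>B i \<longrightarrow> b\<noteq>c \<longrightarrow> d\<in>B r \<longrightarrow> \<not> induces_P4 V E {a,b,c,d}"
      using nb ar by metis
    have ch: "\<forall>x\<in>B i. \<forall>y\<in>B i. nbhd_in E (B p \<union> B r) x \<subseteq> nbhd_in E (B p \<union> B r) y
        \<or> nbhd_in E (B p \<union> B r) y \<subseteq> nbhd_in E (B p \<union> B r) x"
      using chain_core[OF g assms(3) sub cl ac dj np4] by blast
    have fi: "\<forall>x\<in>B i. finite (nbhd_in E (B p \<union> B r) x)"
      using sub finV unfolding nbhd_in_def by (auto intro: finite_subset)
    have nbp: "\<forall>u\<in>B p. \<exists>w\<in>B i. E u w" using nb ar by metis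
    have nbr: "\<forall>u\<in>B r. \<exists>w\<in>B i. E u w" using nb ar by metis
    have "finite (B i)" using sub finV by (auto intro: finite_subset)
    then show "?thesis i" using ch fi nbp nbr ne unfolding p_def r_def by blast
  qed
  show ?thesis
  proof (intro conjI allI impI ballI)
    fix i :: nat assume i: "i < 5"
    show "\<exists>bs. distinct bs \<and> set bs = B i \<and>
           (\<forall>j. Suc j < length bs \<longrightarrow>
              nbhd_in E (B ((i + 4) mod 5) \<union> B ((i + 1) mod 5)) (bs ! j)
              \<subseteq> nbhd_in E (B ((i + 4) mod 5) \<union> B ((i + 1) mod 5)) (bs ! Suc j))"
      using key[OF i] by (intro chain_sort) auto
  next
    fix i :: nat assume i: "i < 5"
    obtain v where v: "v \<in> B i" and vm: "\<forall>u\<in>B i. nbhd_in E (B ((i + 4) mod 5) \<union> B ((i + 1) mod 5)) u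
        \<subseteq> nbhd_in E (B ((i + 4) mod 5) \<union> B ((i + 1) mod 5)) v"
      using chain_max[of "B i" "nbhd_in E (B ((i + 4) mod 5) \<union> B ((i + 1) mod 5))"] key[OF i] by blast
    have cv: "complete_to E v (B ((i + 4) mod 5) \<union> B ((i + 1) mod 5))"
      unfolding complete_to_def
    proof
      fix u assume u: "u \<in> B ((i + 4) mod 5) \<union> B ((i + 1) mod 5)"
      then obtain w where w: "w \<in> B i" "E u w" using key[OF i] by blast
      then have "u \<in> nbhd_in E (B ((i + 4) mod 5) \<union> B ((i + 1) mod 5)) w"
        using u sym unfolding nbhd_in_def by auto
      then show "E v u" using vm w unfolding nbhd_in_def by blast
    qed
    then show "\<exists>v\<in>B i. complete_to E v (B ((i + 4) mod 5) \<union> B ((i + 1) mod 5))" using v by blast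
    fix x y assume "x \<in> B ((i + 4) mod 5)" "y \<in> B ((i + 1) mod 5)"
    then show "\<exists>z\<in>B i. E x z \<and> E y z" using cv v sym unfolding complete_to_def by blast
  qed
qed

end
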